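(* Let $(X,\mathcal{C})$ be a separable convexity space with Radon number at most $r$, let $E$ be a non-empty finite set, and let $m\ge 2$ be an integer. For any family of functions $f_1,\dots,f_m$ with $f_i:E\to X$ and $\bigcap_{i=1}^m\mathrm{conv}(f_i(E))=\emptyset$, there exist a subset $E_0\subset E$ with $|E_0|\ge\frac{1}{r-1}|E|$, indices $i,j$, and a halfspace $\gamma\in\mathcal{C}$ such that $f_i(E_0)\subset\gamma$ and $f_j(E_0)\subset X\setminus\gamma$.
   Context: A convexity space $(X,\mathcal{C})$ is a non-empty set $X$ with $\mathcal{C}\subset 2^X$ such that: $\emptyset, X\in\mathcal{C}$; $\mathcal{C}$ is closed under intersections of non-empty subfamilies; and $\mathcal{C}$ is closed under unions of non-empty subfamilies totally ordered by inclusion. Members of $\mathcal{C}$ are convex sets; $\mathrm{conv}(Y)$ is the intersection of all convex sets containing $Y$. The Radon number is the smallest $n$ such that every $Y\subset X$ with $|Y|=n$ has a partition $Y=A\cup B$ with $\mathrm{conv}(A)\cap\mathrm{conv}(B)\neq\emptyset$. A halfspace is $\gamma\in\mathcal{C}$ with $X\setminus\gamma\in\mathcal{C}$. The space is separable if for every $S\in\mathcal{C}$ and $x\in X\setminus S$ there is a halfspace $\gamma$ with $S\subset\gamma$ and $x\notin\gamma$. *)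

theory Defs
  imports Complex_Main
begin

definition convexity_space :: "'a set \<Rightarrow> 'a set set \<Rightarrow> bool" where
  "convexity_space X C \<longleftrightarrow>
     X \<noteq> {} \<and> C \<subseteq> Pow X \<and> {} \<in> C \<and> X \<in> C \<and>
     (\<forall>F. F \<noteq> {} \<and> F \<subseteq> C \<longrightarrow> \<Inter>F \<in> C) \<and>
     (\<forall>F. F \<noteq> {} \<and> F \<subseteq> C \<and> (\<forall>A\<in>F. \<forall>B\<in>F. A \<subseteq> B \<or> B \<subseteq> A) \<longrightarrow> \<Union>F \<in> C)"

definition cconv :: "'a set set \<Rightarrow> 'a set \<Rightarrow> 'a set" where
  "cconv C Y = \<Inter>{S \<in> C. Y \<subseteq> S}"

definition radon_property :: "'a set \<Rightarrow> 'a set set \<Rightarrow> nat \<Rightarrow> bool" where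
  "radon_property X C n \<longleftrightarrow>
     (\<forall>Y. Y \<subseteq> X \<and> finite Y \<and> card Y = n \<longrightarrow>
        (\<exists>A B. A \<union> B = Y \<and> A \<inter> B = {} \<and> cconv C A \<inter> cconv C B \<noteq> {}))"

definition radon_number_le :: "'a set \<Rightarrow> 'a set set \<Rightarrow> nat \<Rightarrow> bool" where
  "radon_number_le X C r \<longleftrightarrow> (\<exists>n \<le> r. radon_property X C n)"

definition halfspace :: "'a set \<Rightarrow> 'a set set \<Rightarrow> 'a set \<Rightarrow> bool" where
  "halfspace X C \<gamma> \<longleftrightarrow> \<gamma> \<in> C \<and> X - \<gamma> \<in> C"

definition separable :: "'a set \<Rightarrow> 'a set set \<Rightarrow> bool" where
  "separable X C \<longleftrightarrow>
     (\<forall>S\<in>C. \<forall>x\<in>X - S. \<exists>\<gamma>. halfspace X C \<gamma> \<and> S \<subseteq> \<gamma> \<and> x \<notin> \<gamma>)"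

end

theory Submission
  imports Defs
begin

lemma cconv_sub: "S \<in> C \<Longrightarrow> Y \<subseteq> S \<Longrightarrow> cconv C Y \<subseteq> S"
  unfolding cconv_def by blast

lemma cconv_sup: "Y \<subseteq> cconv C Y"
  unfolding cconv_def by blast

lemma cconv_in:
  assumes cs: "convexity_space X C" and Y: "Y \<subseteq> X"
  shows "cconv C Y \<in> C"
proof -
  have XC: "X \<in> C" using cs unfolding convexity_space_def by (elim conjE)
  have ne: "{S \<in> C. Y \<subseteq> S} \<noteq> {}" using XC Y by blast
  have "\<forall>F. F \<noteq> {} \<and> F \<subseteq> C \<longrightarrow> \<Inter>F \<in> C" using cs unfolding convexity_space_def by (elim conjE)
  hence "\<Inter>{S \<in> C. Y \<subseteq> S} \<in> C" using ne by (metis (no_types, lifting) mem_Collect_eq subsetI)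
  thus ?thesis unfolding cconv_def .
qed

lemma cs_ne: "convexity_space X C \<Longrightarrow> X \<noteq> {}"
  unfolding convexity_space_def by (elim conjE)

lemma cs_pow: "convexity_space X C \<Longrightarrow> S \<in> C \<Longrightarrow> S \<subseteq> X"
  unfolding convexity_space_def by (elim conjE) blast

lemma cconv_empty:
  assumes cs: "convexity_space X C" shows "cconv C {} = {}"
proof -
  have "{} \<in> C" using cs unfolding convexity_space_def by (elim conjE)
  thus ?thesis unfolding cconv_def by blast
qed

lemma radon_ge2:
  assumes cs: "convexity_space X C" and rp: "radon_property X C n"
  shows "n \<ge> 2"
proof (rule ccontr)
  assume "\<not> n \<ge> 2"
  hence "n = 0 \<or> n = 1" by auto
  moreover obtain x where x: "x \<in> X" using cs_ne[OF cs] by blast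
  ultimately obtain Y where Y: "Y \<subseteq> X" "finite Y" "card Y = n" "card Y \<le> 1"
  proof -
    assume h: "n = 0 \<or> n = 1" "x \<in> X" and r: "\<And>Y. Y \<subseteq> X \<Longrightarrow> finite Y \<Longrightarrow> card Y = n \<Longrightarrow> card Y \<le> 1 \<Longrightarrow> thesis"
    show thesis
    proof (cases "n = 0")
      case True thus thesis using r[of "{}"] by simp
    next
      case False thus thesis using r[of "{x}"] h x by simp
    qed
  qed
  have "\<exists>A B. A \<union> B = Y \<and> A \<inter> B = {} \<and> cconv C A \<inter> cconv C B \<noteq> {}"
    using rp Y unfolding radon_property_def by simp
  then obtain A B where AB: "A \<union> B = Y" "A \<inter> B = {}" "cconv C A \<inter> cconv C B \<noteq> {}"
    by blast
  have "A = {} \<or> B = {}"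
  proof (rule ccontr)
    assume "\<not> (A = {} \<or> B = {})"
    then obtain a b where "a \<in> A" "b \<in> B" by blast
    hence "a \<noteq> b" using AB by blast
    hence "card {a,b} \<le> card Y" using AB \<open>a\<in>A\<close> \<open>b\<in>B\<close> Y
      by (intro card_mono) auto
    thus False using \<open>a\<noteq>b\<close> Y by simp
  qed
  thus False using AB cconv_empty[OF cs] by auto
qed

lemma radon_mono:
  assumes rp: "radon_property X C n" and Y: "Y \<subseteq> X" "finite Y" "card Y \<ge> n"
  shows "\<exists>A B. A \<union> B = Y \<and> A \<inter> B = {} \<and> cconv C A \<inter> cconv C B \<noteq> {}"
proof -
  obtain Z where Z: "Z \<subseteq> Y" "card Z = n"
    using obtain_subset_with_card_n[OF Y(3)] by blast
  have fZ: "finite Z" using Z(1) Y(2) by (rule finite_subset)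
  have ZX: "Z \<subseteq> X" using Z(1) Y(1) by (rule order_trans)
  have "\<exists>A B. A \<union> B = Z \<and> A \<inter> B = {} \<and> cconv C A \<inter> cconv C B \<noteq> {}"
    using rp ZX fZ Z(2) unfolding radon_property_def by simp
  then obtain A B where AB: "A \<union> B = Z" "A \<inter> B = {}" "cconv C A \<inter> cconv C B \<noteq> {}"
    by blast
  have "cconv C B \<subseteq> cconv C (B \<union> (Y - Z))" unfolding cconv_def by blast
  hence "cconv C A \<inter> cconv C (B \<union> (Y - Z)) \<noteq> {}" using AB(3) by blast
  moreover have "A \<union> (B \<union> (Y - Z)) = Y" using AB Z by auto
  moreover have "A \<inter> (B \<union> (Y - Z)) = {}" using AB Z by auto
  ultimately show ?thesis by blast
qed

lemma helly:
  assumes cs: "convexity_space X C" and rp: "radon_property X C n"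
  shows "finite F \<Longrightarrow> F \<subseteq> C \<Longrightarrow> (\<forall>G\<subseteq>F. card G < n \<longrightarrow> \<Inter>G \<noteq> {}) \<Longrightarrow> \<Inter>F \<noteq> {}"
proof (induction "card F" arbitrary: F rule: less_induct)
  case (less F)
  have n2: "n \<ge> 2" using radon_ge2[OF cs rp] .
  show ?case
  proof (cases "card F < n")
    case True thus ?thesis using less.prems by blast
  next
    case False
    hence cF: "card F \<ge> n" by simp
    have "\<forall>S\<in>F. \<Inter>(F - {S}) \<noteq> {}"
    proof
      fix S assume "S \<in> F"
      hence "card (F - {S}) < card F" using less.prems(1) by (meson card_Diff1_less)
      thus "\<Inter>(F - {S}) \<noteq> {}" using less.hyps[of "F - {S}"] less.prems by blast
    qed
    hence "\<forall>S\<in>F. \<exists>y. y \<in> \<Inter>(F - {S})" by blast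
    then obtain x where x0: "\<forall>S\<in>F. x S \<in> \<Inter>(F - {S})" by (rule bchoice[elim_format]) blast
    hence x: "\<And>S. S \<in> F \<Longrightarrow> x S \<in> \<Inter>(F - {S})" by blast
    show ?thesis
    proof (cases "inj_on x F")
      case False
      then obtain S T where ST: "S \<in> F" "T \<in> F" "S \<noteq> T" "x S = x T"
        unfolding inj_on_def by blast
      have "x S \<in> \<Inter>F"
      proof
        fix U assume "U \<in> F"
        show "x S \<in> U"
        proof (cases "U = S")
          case True thus ?thesis using x[OF ST(2)] ST \<open>U\<in>F\<close> by auto
        next
          case False thus ?thesis using x[OF ST(1)] \<open>U\<in>F\<close> by auto
        qed
      qed
      thus ?thesis by blast
    next
      case True
      have cY: "card (x ` F) = card F" using True card_image by blast
      have "F - {} \<noteq> {}" using cF n2 by auto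
      have YX: "x ` F \<subseteq> X"
      proof
        fix y assume "y \<in> x ` F"
        then obtain S where S: "S \<in> F" "y = x S" by blast
        have "card F \<ge> 2" using cF n2 by simp
        then obtain T where T: "T \<in> F" "T \<noteq> S"
          by (metis One_nat_def card_le_Suc0_iff_eq less.prems(1) not_less_eq_eq numeral_2_eq_2)
        have "x S \<in> T" using x[OF S(1)] T by blast
        moreover have "T \<subseteq> X" using T less.prems(2) cs_pow[OF cs] by blast
        ultimately show "y \<in> X" using S by blast
      qed
      obtain A B where AB: "A \<union> B = x ` F" "A \<inter> B = {}" "cconv C A \<inter> cconv C B \<noteq> {}"
        using radon_mono[OF rp YX] cY cF less.prems(1) by auto
      then obtain p where p: "p \<in> cconv C A" "p \<in> cconv C B" by blast
      have "p \<in> \<Inter>F"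
      proof
        fix S assume S: "S \<in> F"
        have SC: "S \<in> C" using S less.prems(2) by blast
        have "x S \<notin> A \<or> x S \<notin> B" using AB by blast
        thus "p \<in> S"
        proof
          assume "x S \<notin> A"
          have "A \<subseteq> S"
          proof
            fix a assume "a \<in> A"
            then obtain T where "T \<in> F" "a = x T" using AB by blast
            thus "a \<in> S" using \<open>x S \<notin> A\<close> \<open>a\<in>A\<close> x S by blast
          qed
          thus "p \<in> S" using cconv_sub[OF SC] p by blast
        next
          assume "x S \<notin> B"
          have "B \<subseteq> S"
          proof
            fix a assume "a \<in> B"
            then obtain T where "T \<in> F" "a = x T" using AB by blast
            thus "a \<in> S" using \<open>x S \<notin> B\<close> \<open>a\<in>B\<close> x S by blast
          qed
          thus "p \<in> S" using cconv_sub[OF SC] p by blast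
        qed
      qed
      thus ?thesis by blast
    qed
  qed
qed

theorem lemma3p1:
  fixes X :: "'a set" and C :: "'a set set" and r :: nat
    and E :: "'e set" and m :: nat and f :: "nat \<Rightarrow> 'e \<Rightarrow> 'a"
  assumes "convexity_space X C" and "separable X C" and "radon_number_le X C r"
    and "finite E" and "E \<noteq> {}" and "m \<ge> 2"
    and "\<And>i. i \<in> {1..m} \<Longrightarrow> f i ` E \<subseteq> X"
    and "(\<Inter>i\<in>{1..m}. cconv C (f i ` E)) = {}"
  shows "\<exists>E0 \<subseteq> E. real (card E0) \<ge> real (card E) / (real r - 1) \<and>
           (\<exists>i\<in>{1..m}. \<exists>j\<in>{1..m}. \<exists>\<gamma>. halfspace X C \<gamma> \<and>
              f i ` E0 \<subseteq> \<gamma> \<and> f j ` E0 \<subseteq> X - \<gamma>)"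
proof -
  note cs = assms(1)
  obtain n where nr: "n \<le> r" and rp: "radon_property X C n"
    using assms(3) unfolding radon_number_le_def by blast
  have n2: "n \<ge> 2" using radon_ge2[OF cs rp] .
  define h where "h = n - 1"
  have h1: "h \<ge> 1" using n2 h_def by simp
  define N where "N = card E"
  have N0: "N > 0" unfolding N_def using assms(4,5) by (simp add: card_gt_0_iff)
  have one: "1 \<in> {1..m}" using assms(6) by simp
  have f1X: "f 1 ` E \<subseteq> X" using assms(7)[OF one] .
  define big where "big = {E'. E' \<subseteq> E \<and> h * card E' > (h - 1) * N}"
  define F where "F = (\<lambda>E'. cconv C (f 1 ` E')) ` big"
  have "big \<subseteq> Pow E" unfolding big_def by blast
  hence "finite big" using assms(4) finite_subset by blast
  hence finF: "finite F" unfolding F_def by (rule finite_imageI)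
  have FC: "F \<subseteq> C"
  proof
    fix S assume "S \<in> F"
    then obtain E' where E': "E' \<in> big" "S = cconv C (f 1 ` E')" unfolding F_def by blast
    hence "f 1 ` E' \<subseteq> X" using f1X unfolding big_def by blast
    thus "S \<in> C" using E' cconv_in[OF cs] by blast
  qed
  have Ebig: "E \<in> big" unfolding big_def N_def using h1 N0 N_def
    by (simp add: mult_strict_right_mono)
  have hyp: "\<forall>G\<subseteq>F. card G < n \<longrightarrow> \<Inter>G \<noteq> {}"
  proof (intro allI impI)
    fix G assume G: "G \<subseteq> F" "card G < n"
    show "\<Inter>G \<noteq> {}"
    proof (cases "G = {}")
      case True thus ?thesis by simp
    next
      case False
      have "\<forall>S\<in>G. \<exists>E'. E' \<in> big \<and> S = cconv C (f 1 ` E')" using G(1) unfolding F_def by blast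
      then obtain g where g: "\<forall>S\<in>G. g S \<in> big \<and> S = cconv C (f 1 ` g S)"
        by (rule bchoice[elim_format]) blast
      have finG: "finite G" using G finF finite_subset by blast
      have cG: "card G \<le> h" using G h_def by simp
      have each: "\<And>S. S \<in> G \<Longrightarrow> h * card (E - g S) < N"
      proof -
        fix S assume "S \<in> G"
        hence gs: "g S \<subseteq> E" "h * card (g S) > (h - 1) * N" using g big_def by auto
        have "card (E - g S) = N - card (g S)" using gs assms(4) N_def card_Diff_subset
          by (metis finite_subset)
        moreover have "card (g S) \<le> N" using gs assms(4) N_def card_mono by metis
        moreover have "h * card (g S) \<le> h * N" using calculation(2) by simp
        moreover have "N \<le> h * N" using h1 by simp
        moreover have "(h - 1) * N = h * N - N" by (simp add: diff_mult_distrib)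
        moreover have "h * (N - card (g S)) = h * N - h * card (g S)" by (simp add: diff_mult_distrib2)
        moreover have "h * card (E - g S) = h * (N - card (g S))" using calculation(1) by simp
        ultimately show "h * card (E - g S) < N" using gs by linarith
      qed
      have "card (\<Union>S\<in>G. E - g S) \<le> (\<Sum>S\<in>G. card (E - g S))" by (rule card_UN_le[OF finG])
      moreover have "h * (\<Sum>S\<in>G. card (E - g S)) < card G * N"
      proof -
        have "h * (\<Sum>S\<in>G. card (E - g S)) = (\<Sum>S\<in>G. h * card (E - g S))"
          by (simp add: sum_distrib_left)
        also have "\<dots> < (\<Sum>S\<in>G. N)" using each finG False by (intro sum_strict_mono) auto
        finally show ?thesis by simp
      qed
      moreover have "card G * N \<le> h * N" using cG by simp
      ultimately have "h * card (\<Union>S\<in>G. E - g S) < h * N"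
        by (meson le_less_trans mult_le_mono2 order_less_le_trans)
      hence "card (\<Union>S\<in>G. E - g S) < N" by simp
      hence "\<not> E \<subseteq> (\<Union>S\<in>G. E - g S)" using N_def assms(4)
        by (metis card_mono finite_UN_I finite_Diff finG leD)
      then obtain e where e: "e \<in> E" "\<forall>S\<in>G. e \<in> g S" by blast
      have "f 1 e \<in> \<Inter>G"
      proof
        fix S assume "S \<in> G"
        hence "f 1 e \<in> f 1 ` g S" using e by blast
        moreover have "S = cconv C (f 1 ` g S)" using g \<open>S\<in>G\<close> by blast
        ultimately show "f 1 e \<in> S" using cconv_sup[of "f 1 ` g S" C] by auto
      qed
      thus ?thesis by blast
    qed
  qed
  obtain c where c: "c \<in> \<Inter>F" using helly[OF cs rp finF FC hyp] by blast
  have "cconv C (f 1 ` E) \<in> F" using Ebig unfolding F_def by (rule imageI)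
  hence cK1: "c \<in> cconv C (f 1 ` E)" using c by blast
  have cX: "c \<in> X" using cK1 cs_pow[OF cs cconv_in[OF cs f1X]] by blast
  obtain i where i: "i \<in> {1..m}" "c \<notin> cconv C (f i ` E)" using assms(8) cK1 one by blast
  have KiC: "cconv C (f i ` E) \<in> C" using cconv_in[OF cs assms(7)[OF i(1)]] .
  obtain \<gamma> where gam: "halfspace X C \<gamma>" "cconv C (f i ` E) \<subseteq> \<gamma>" "c \<notin> \<gamma>"
    using assms(2) KiC cX i unfolding separable_def by blast
  define E0 where "E0 = {e\<in>E. f 1 e \<notin> \<gamma>}"
  have gC: "\<gamma> \<in> C" using gam unfolding halfspace_def by blast
  have "E - E0 \<notin> big"
  proof
    assume "E - E0 \<in> big"
    hence "cconv C (f 1 ` (E - E0)) \<in> F" unfolding F_def by (rule imageI)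
    hence "c \<in> cconv C (f 1 ` (E - E0))" using c by blast
    moreover have "f 1 ` (E - E0) \<subseteq> \<gamma>" unfolding E0_def by blast
    hence "cconv C (f 1 ` (E - E0)) \<subseteq> \<gamma>" using cconv_sub[OF gC] by blast
    ultimately show False using gam by blast
  qed
  hence le: "h * card (E - E0) \<le> (h - 1) * N" unfolding big_def by auto
  have E0E: "E0 \<subseteq> E" unfolding E0_def by blast
  have "card (E - E0) = N - card E0" unfolding N_def using E0E assms(4)
    by (meson card_Diff_subset finite_subset)
  moreover have "card E0 \<le> N" unfolding N_def using E0E assms(4) by (rule card_mono[rotated])
  moreover have "h * card E0 \<le> h * N" using calculation(2) by simp
  moreover have "N \<le> h * N" using h1 by simp
  moreover have "(h - 1) * N = h * N - N" by (simp add: diff_mult_distrib)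
  moreover have "h * (N - card E0) = h * N - h * card E0" by (simp add: diff_mult_distrib2)
  moreover have "h * card (E - E0) = h * (N - card E0)" using calculation(1) by simp
  ultimately have "N \<le> h * card E0" using le by linarith
  hence r1: "real N \<le> real h * real (card E0)" by (metis of_nat_le_iff of_nat_mult)
  have hr: "real h \<le> real r - 1" "real h \<ge> 1" using h_def nr n2 h1 by auto
  have "real N / (real r - 1) \<le> real N / real h"
    using hr by (intro divide_left_mono) auto
  also have "\<dots> \<le> real (card E0)" using r1 hr by (simp add: divide_le_eq mult.commute)
  finally have card: "real (card E) / (real r - 1) \<le> real (card E0)" using N_def by simp
  have s1: "f i ` E0 \<subseteq> \<gamma>" using gam(2) cconv_sup[of "f i ` E" C] E0E by blast
  have s2: "f 1 ` E0 \<subseteq> X - \<gamma>" using f1X unfolding E0_def by blast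
  show ?thesis using card s1 s2 i(1) one gam(1) E0E by blast
qed

end
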